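(* Let $d\ge2$ and let $g,g_0,\dots,g_d$ be positive integers with $g=\mathrm{lcm}(g_0,\dots,g_d)$. Let $A=(\alpha_0,\dots,\alpha_d)$ be positive integers with $\sum_{i=0}^d1/\alpha_i=1/g$, and let $w=(w_0,\dots,w_d)$ with $w_i=t_A/\alpha_i$, $t_A=\mathrm{lcm}(\alpha_0,\dots,\alpha_d)$, $|w|=\sum w_i$. Let $P=[v_0\ \cdots\ v_d]$ be a $d\times(d+1)$ integer matrix of the form $$P=\begin{pmatrix}a_{11}&a_{12}&\cdots&a_{1d}&-b_1\\0&a_{22}&\cdots&a_{2d}&-b_2\\\vdots&\ddots&\ddots&\vdots&\vdots\\0&\cdots&0&a_{dd}&-b_d\end{pmatrix}$$ such that for all $k=1,\dots,d$: (i) $a_{kk}\ge1$ and $a_{kk}\mid\alpha_{k-1}$; (ii) $0\le a_{ik}<a_{kk}$ for $1\le i<k$; (iii) $b_kw_d=a_{kk}w_{k-1}+a_{k,k+1}w_k+\dots+a_{kd}w_{d-1}$. Then $\Delta=\Delta(P)$ is a $d$-dimensional lattice simplex containing the origin in its interior, its reduced weight system is $w$, and for $k=0,\dots,d$ the vertex $u_k=(u_{k1},\dots,u_{kd})$ of $\Delta^*$ satisfying $\langle u_k,v_j\rangle=-1$ for all $j\ne k$ is given recursively for $j=1,\dots,d$ by $$u_{kj}=\begin{cases}\dfrac{|w|-w_k}{a_{jj}w_k}-\dfrac{\sum_{l=1}^{j-1}a_{lj}u_{kl}}{a_{jj}},& j=k+1,\\[2mm] \dfrac{-1-\sum_{l=1}^{j-1}a_{lj}u_{kl}}{a_{jj}},&\text{otherwise.}\end{cases}$$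 If moreover $g_ku_k$ is a primitive vector of $\mathbb{Z}^d$ for every $k$, then $\Delta$ has Gorenstein index $g$ and local Gorenstein indices $g_0,\dots,g_d$.
   Context: $\Delta(P)$ is the convex hull of the columns of $P$; its dual is $\Delta^*=\{u:\langle u,v\rangle\ge-1\ \forall v\in\Delta\}$. For an IP lattice simplex (vertices in $\mathbb{Z}^d$, origin in the interior) with vertices $v_0,\dots,v_d$, the weight system is $(q_0,\dots,q_d)$, $q_i=|\det(v_j:j\ne i)|$, and the reduced weight system is it divided by $\gcd(q_0,\dots,q_d)$. The $k$-th local Gorenstein index is the least positive integer $g_k$ with $g_ku_k\in\mathbb{Z}^d$, where $u_k$ is the vertex of $\Delta^*$ with $\langle u_k,v_j\rangle=-1$ for $j\neq k$; the Gorenstein index is the least $g\ge1$ with $g\Delta^*$ integral, equivalently $\mathrm{lcm}(g_0,\dots,g_d)$. *)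

theory Defs
  imports Complex_Main "Jordan_Normal_Form.Determinant"
begin

text \<open>Points of R^d are represented as functions nat => real that vanish outside
  the coordinate index set {1..d}.  A family of d+1 lattice points is a function
  V :: nat => nat => int, where V j is the j-th point (j = 0..d) and V j i its
  i-th coordinate (i = 1..d).\<close>

definition in_Rd :: "nat \<Rightarrow> (nat \<Rightarrow> real) \<Rightarrow> bool" where
  "in_Rd d x \<longleftrightarrow> (\<forall>i. i \<notin> {1..d} \<longrightarrow> x i = 0)"

definition ip :: "nat \<Rightarrow> (nat \<Rightarrow> real) \<Rightarrow> (nat \<Rightarrow> real) \<Rightarrow> real" where
  "ip d u x = (\<Sum>i=1..d. u i * x i)"

definition vec_of :: "(nat \<Rightarrow> int) \<Rightarrow> nat \<Rightarrow> real" where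
  "vec_of v = (\<lambda>i. real_of_int (v i))"

text \<open>The columns of the matrix P: column j (j = 0..d-1) is (a_{1,j+1},...,a_{j+1,j+1},0,...,0),
  the last column (j = d) is -b.\<close>
definition vtx :: "(nat \<Rightarrow> nat \<Rightarrow> int) \<Rightarrow> (nat \<Rightarrow> int) \<Rightarrow> nat \<Rightarrow> nat \<Rightarrow> nat \<Rightarrow> int" where
  "vtx a b d j i = (if i \<notin> {1..d} then 0 else if j < d then (if i \<le> j + 1 then a i (j + 1) else 0) else - b i)"

definition simplex_hull :: "(nat \<Rightarrow> nat \<Rightarrow> int) \<Rightarrow> nat \<Rightarrow> (nat \<Rightarrow> real) set" where
  "simplex_hull V d = {x. in_Rd d x \<and> (\<exists>c::nat \<Rightarrow> real. (\<forall>j\<le>d. 0 \<le> c j) \<and> (\<Sum>j\<le>d. c j) = 1 \<and>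
       (\<forall>i\<in>{1..d}. x i = (\<Sum>j\<le>d. c j * real_of_int (V j i))))}"

definition aff_indep :: "(nat \<Rightarrow> nat \<Rightarrow> int) \<Rightarrow> nat \<Rightarrow> bool" where
  "aff_indep V d \<longleftrightarrow> (\<forall>c::nat \<Rightarrow> real. (\<Sum>j\<le>d. c j) = 0 \<and>
       (\<forall>i\<in>{1..d}. (\<Sum>j\<le>d. c j * real_of_int (V j i)) = 0) \<longrightarrow> (\<forall>j\<le>d. c j = 0))"

definition origin_in_interior :: "(nat \<Rightarrow> nat \<Rightarrow> int) \<Rightarrow> nat \<Rightarrow> bool" where
  "origin_in_interior V d \<longleftrightarrow> (\<exists>\<epsilon>>0. \<forall>x. in_Rd d x \<and> (\<Sum>i=1..d. (x i)\<^sup>2) < \<epsilon>\<^sup>2 \<longrightarrow> x \<in> simplex_hull V d)"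

definition IP_lattice_simplex :: "(nat \<Rightarrow> nat \<Rightarrow> int) \<Rightarrow> nat \<Rightarrow> bool" where
  "IP_lattice_simplex V d \<longleftrightarrow> aff_indep V d \<and> origin_in_interior V d"

definition dual_poly :: "(nat \<Rightarrow> nat \<Rightarrow> int) \<Rightarrow> nat \<Rightarrow> (nat \<Rightarrow> real) set" where
  "dual_poly V d = {u. in_Rd d u \<and> (\<forall>x\<in>simplex_hull V d. ip d u x \<ge> -1)}"

definition is_vertex :: "(nat \<Rightarrow> real) set \<Rightarrow> (nat \<Rightarrow> real) \<Rightarrow> bool" where
  "is_vertex S u \<longleftrightarrow> u \<in> S \<and> \<not> (\<exists>y z. y \<in> S \<and> z \<in> S \<and> y \<noteq> z \<and> u = (\<lambda>i. (y i + z i) / 2))"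

text \<open>Weight system q_i = |det(v_j : j ~= i)| (columns in increasing order of j).\<close>
definition weight :: "(nat \<Rightarrow> nat \<Rightarrow> int) \<Rightarrow> nat \<Rightarrow> nat \<Rightarrow> int" where
  "weight V d i = \<bar>det (mat d d (\<lambda>(r, c). V (if c < i then c else Suc c) (Suc r)))\<bar>"

definition reduced_weight :: "(nat \<Rightarrow> nat \<Rightarrow> int) \<Rightarrow> nat \<Rightarrow> nat \<Rightarrow> int" where
  "reduced_weight V d i = weight V d i div Gcd (weight V d ` {0..d})"

definition dual_vertex :: "(nat \<Rightarrow> nat \<Rightarrow> int) \<Rightarrow> nat \<Rightarrow> nat \<Rightarrow> nat \<Rightarrow> real" where
  "dual_vertex V d k = (THE u. is_vertex (dual_poly V d) u \<and>
      (\<forall>j\<le>d. j \<noteq> k \<longrightarrow> ip d u (vec_of (V j)) = -1))"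

definition local_gorenstein_index :: "(nat \<Rightarrow> nat \<Rightarrow> int) \<Rightarrow> nat \<Rightarrow> nat \<Rightarrow> nat" where
  "local_gorenstein_index V d k =
     (LEAST n::nat. n \<ge> 1 \<and> (\<forall>j\<in>{1..d}. real n * dual_vertex V d k j \<in> \<int>))"

definition gorenstein_index :: "(nat \<Rightarrow> nat \<Rightarrow> int) \<Rightarrow> nat \<Rightarrow> nat" where
  "gorenstein_index V d =
     (LEAST n::nat. n \<ge> 1 \<and> (\<forall>u. is_vertex (dual_poly V d) u \<longrightarrow> (\<forall>j\<in>{1..d}. real n * u j \<in> \<int>)))"

definition primitive_vec :: "nat \<Rightarrow> (nat \<Rightarrow> int) \<Rightarrow> bool" where
  "primitive_vec d z \<longleftrightarrow> Gcd (z ` {1..d}) = 1"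

end

theory Submission
  imports Defs
begin

lemma ip_lin_left:
  "ip d (\<lambda>i. \<Sum>k\<in>K. f k * g k i) x = (\<Sum>k\<in>K. f k * ip d (g k) x)"
  unfolding ip_def by (simp add: sum_distrib_left sum_distrib_right mult.assoc sum.swap[of _ K])

lemma ip_diff_left: "ip d (\<lambda>i. u i - v i) x = ip d u x - ip d v x"
  unfolding ip_def by (simp add: sum_subtractf left_diff_distrib)

lemma ip_axpy: "ip d (\<lambda>i. u i + e * h i) x = ip d u x + e * ip d h x"
  unfolding ip_def by (simp add: sum.distrib sum_distrib_left distrib_right mult.assoc)

lemma ip_diff_right: "ip d u (\<lambda>i. f i - g i) = ip d u f - ip d u g"
  unfolding ip_def by (simp add: sum_subtractf right_diff_distrib)

lemma ip_mid: "ip d (\<lambda>i. (y i + z i) / 2) x = (ip d y x + ip d z x) / 2"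
  unfolding ip_def by (simp add: sum.distrib add_divide_distrib sum_divide_distrib distrib_right)

locale tri =
  fixes d :: nat and a :: "nat \<Rightarrow> nat \<Rightarrow> int" and b :: "nat \<Rightarrow> int" and w :: "nat \<Rightarrow> nat"
  assumes d1: "d \<ge> 1"
    and diag: "\<forall>k\<in>{1..d}. a k k \<ge> 1"
    and wpos: "\<forall>i\<le>d. w i > 0"
    and rel: "\<forall>k\<in>{1..d}. b k * int (w d) = (\<Sum>j\<in>{k..d}. a k j * int (w (j - 1)))"
begin

abbreviation "P j \<equiv> vec_of (vtx a b d j)"

lemma P_in: "in_Rd d (P j)"
  unfolding in_Rd_def vec_of_def vtx_def by auto

lemma ip_P: assumes "j \<in> {1..d}" shows "ip d u (P (j - 1)) = (\<Sum>i=1..j. u i * a i j)"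
proof -
  have "ip d u (P (j - 1)) = (\<Sum>i=1..d. (if i \<le> j then u i * a i j else 0))"
    unfolding ip_def vec_of_def vtx_def using assms by (intro sum.cong) auto
  also have "\<dots> = (\<Sum>i=1..j. u i * a i j)"
    using assms by (intro sum.mono_neutral_cong_right) auto
  finally show ?thesis .
qed

lemma inj0: assumes "in_Rd d u" "\<forall>j<d. ip d u (P j) = 0" shows "u = (\<lambda>_. 0)"
proof -
  have "\<forall>i<j. u i = 0" if "j \<le> Suc d" for j
    using that
  proof (induction j)
    case 0 then show ?case by simp
  next
    case (Suc j)
    have "u j = 0"
    proof (cases "j \<in> {1..d}")
      case False then show ?thesis using assms(1) unfolding in_Rd_def by auto
    next
      case True
      have "ip d u (P (j - 1)) = 0" using assms(2) True by auto
      hence "(\<Sum>i=1..j. u i * a i j) = 0" using ip_P[OF True] by simp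
      moreover have "{1..j} = insert j {1..<j}" using True by auto
      moreover have "(\<Sum>i=1..<j. u i * a i j) = 0" using Suc by auto
      ultimately have "u j * a j j = 0" by simp
      moreover have "a j j \<noteq> 0" using diag True by fastforce
      ultimately show ?thesis by simp
    qed
    then show ?case using Suc by (auto simp: less_Suc_eq)
  qed
  then show ?thesis using assms(1) unfolding in_Rd_def by (auto intro!: ext)
qed

lemma exist_part:
  fixes c :: "nat \<Rightarrow> real"
  assumes "n \<le> d"
  shows "\<exists>u::nat\<Rightarrow>real. (\<forall>i. i \<notin> {1..n} \<longrightarrow> u i = 0) \<and> (\<forall>j\<in>{1..n}. (\<Sum>i=1..j. u i * a i j) = c (j - 1))"
  using assms
proof (induction n)
  case 0 then show ?case by (auto intro: exI[of _ "\<lambda>_. 0"])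
next
  case (Suc n)
  then obtain u :: "nat \<Rightarrow> real" where u0: "\<forall>i. i \<notin> {1..n} \<longrightarrow> u i = 0"
     and u1: "\<forall>j\<in>{1..n}. (\<Sum>i=1..j. u i * a i j) = c (j - 1)" by auto
  define u' where "u' = u(Suc n := (c n - (\<Sum>i=1..n. u i * a i (Suc n))) / a (Suc n) (Suc n))"
  have "a (Suc n) (Suc n) \<ge> 1" using diag Suc.prems by auto
  then have ann: "real_of_int (a (Suc n) (Suc n)) \<noteq> 0" by simp
  have "(\<Sum>i=1..j. u' i * a i j) = c (j - 1)" if j: "j \<in> {1..Suc n}" for j
  proof (cases "j = Suc n")
    case True
    have "{1..Suc n} = insert (Suc n) {1..n}" by auto
    then have "(\<Sum>i=1..j. u' i * a i j) = u' (Suc n) * a (Suc n) (Suc n) + (\<Sum>i=1..n. u' i * a i (Suc n))"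
      using True by simp
    also have "(\<Sum>i=1..n. u' i * a i (Suc n)) = (\<Sum>i=1..n. u i * a i (Suc n))"
      unfolding u'_def by (intro sum.cong) auto
    finally show ?thesis using ann True unfolding u'_def by simp
  next
    case False
    then have "j \<in> {1..n}" using j by auto
    then have "(\<Sum>i=1..j. u' i * a i j) = (\<Sum>i=1..j. u i * a i j)"
      unfolding u'_def by (intro sum.cong) auto
    then show ?thesis using u1 \<open>j \<in> {1..n}\<close> by simp
  qed
  moreover have "\<forall>i. i \<notin> {1..Suc n} \<longrightarrow> u' i = 0" using u0 unfolding u'_def by auto
  ultimately show ?case by blast
qed

lemma exist:
  fixes c :: "nat \<Rightarrow> real"
  shows "\<exists>u. in_Rd d u \<and> (\<forall>j<d. ip d u (P j) = c j)"
proof -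
  obtain u :: "nat \<Rightarrow> real" where u0: "\<forall>i. i \<notin> {1..d} \<longrightarrow> u i = 0"
     and u1: "\<forall>j\<in>{1..d}. (\<Sum>i=1..j. u i * a i j) = c (j - 1)"
    using exist_part[of d c] by auto
  have "ip d u (P j) = c j" if "j < d" for j
  proof -
    have "ip d u (P j) = (\<Sum>i=1..Suc j. u i * a i (Suc j))" using ip_P[of "Suc j" u] that by simp
    then show ?thesis using u1 that by (metis atLeastAtMost_iff diff_Suc_1 le_add1 plus_1_eq_Suc Suc_leI)
  qed
  then show ?thesis using u0 unfolding in_Rd_def by auto
qed

lemma rel_int: assumes i: "i \<in> {1..d}" shows "(\<Sum>j\<le>d. int (w j) * vtx a b d j i) = 0"
proof -
  have "{..d} = insert d {..<d}" by auto
  then have "(\<Sum>j\<le>d. int (w j) * vtx a b d j i) = (\<Sum>j<d. int (w j) * vtx a b d j i) - int (w d) * b i"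
    using i by (simp add: vtx_def)
  also have "(\<Sum>j<d. int (w j) * vtx a b d j i) = (\<Sum>j<d. int (w j) * (if i \<le> Suc j then a i (Suc j) else 0))"
    using i by (intro sum.cong) (auto simp: vtx_def)
  also have "\<dots> = (\<Sum>j\<in>{Suc 0..<Suc d}. int (w (j - 1)) * (if i \<le> j then a i j else 0))"
    unfolding sum.shift_bounds_Suc_ivl by (simp add: lessThan_atLeast0)
  also have "\<dots> = (\<Sum>j\<in>{i..d}. a i j * int (w (j - 1)))"
    using i by (intro sum.mono_neutral_cong_right) auto
  also have "\<dots> = b i * int (w d)" using rel i by auto
  finally show ?thesis by simp
qed

lemma wsum: "(\<Sum>j\<le>d. real (w j) * ip d u (P j)) = 0"
proof -
  have "(\<Sum>j\<le>d. real (w j) * ip d u (P j)) = (\<Sum>i=1..d. u i * real_of_int (\<Sum>j\<le>d. int (w j) * vtx a b d j i))"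
    unfolding ip_def vec_of_def by (simp add: sum_distrib_left sum.swap[of _ "{..d}"] mult_ac)
  also have "\<dots> = 0" using rel_int by simp
  finally show ?thesis .
qed

definition "W = (\<Sum>i\<le>d. w i)"
definition "tgt k j = (if j = k then (real W - real (w k)) / real (w k) else -1)"
definition "U k = (SOME u. in_Rd d u \<and> (\<forall>j<d. ip d u (P j) = tgt k j))"

lemma U_prop: "in_Rd d (U k) \<and> (\<forall>j<d. ip d (U k) (P j) = tgt k j)"
  unfolding U_def using someI_ex[OF exist[of "tgt k"]] .

lemma uniq_P: assumes "in_Rd d u" "in_Rd d v" "\<forall>j<d. ip d u (P j) = ip d v (P j)"
  shows "u = v"
proof -
  have "(\<lambda>i. u i - v i) = (\<lambda>_. 0)"
    using assms by (intro inj0) (auto simp: in_Rd_def ip_diff_left)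
  then have "u i = v i" for i by (drule_tac fun_cong[of _ _ i]) simp
  then show ?thesis by (rule ext)
qed

lemma W_ge: "k \<le> d \<Longrightarrow> w k \<le> W"
  unfolding W_def by (rule member_le_sum) auto

lemma wk_pos: "k \<le> d \<Longrightarrow> real (w k) > 0" using wpos by auto

lemma sum_other: assumes "k \<le> d" shows "(\<Sum>j\<in>{..d}-{k}. real (w j)) = real W - real (w k)"
proof -
  have "real W = (\<Sum>j\<le>d. real (w j))" unfolding W_def by simp
  also have "\<dots> = real (w k) + (\<Sum>j\<in>{..d}-{k}. real (w j))"
    using assms by (subst sum.remove[of _ k]) auto
  finally show ?thesis by simp
qed

lemma ipk: assumes k: "k \<le> d" and h: "\<forall>j\<le>d. j \<noteq> k \<longrightarrow> ip d u (P j) = -1"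
  shows "ip d u (P k) = (real W - real (w k)) / real (w k)"
proof -
  have "0 = (\<Sum>j\<le>d. real (w j) * ip d u (P j))" using wsum by simp
  also have "\<dots> = real (w k) * ip d u (P k) + (\<Sum>j\<in>{..d}-{k}. real (w j) * ip d u (P j))"
    using k by (subst sum.remove[of _ k]) auto
  also have "(\<Sum>j\<in>{..d}-{k}. real (w j) * ip d u (P j)) = - (\<Sum>j\<in>{..d}-{k}. real (w j))"
    using h by (simp add: sum_negf[symmetric])
  finally have "real (w k) * ip d u (P k) = real W - real (w k)" using sum_other[OF k] by simp
  then show ?thesis using wk_pos[OF k] by (simp add: field_simps)
qed

lemma U_ip: assumes k: "k \<le> d" and j: "j \<le> d"
  shows "ip d (U k) (P j) = (if j = k then (real W - real (w k)) / real (w k) else -1)"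
proof (cases "j < d")
  case True then show ?thesis using U_prop[of k] by (simp add: tgt_def)
next
  case False
  then have jd: "j = d" using j by simp
  show ?thesis
  proof (cases "k = d")
    case True
    have "\<forall>j\<le>d. j \<noteq> k \<longrightarrow> ip d (U k) (P j) = -1" using U_prop[of k] True by (auto simp: tgt_def)
    then show ?thesis using ipk[OF k] jd True by simp
  next
    case False
    then have kd: "k < d" using k by simp
    have "0 = (\<Sum>j\<le>d. real (w j) * ip d (U k) (P j))" using wsum by simp
    also have "{..d} = insert d {..<d}" by auto
    then have "(\<Sum>j\<le>d. real (w j) * ip d (U k) (P j)) = real (w d) * ip d (U k) (P d) + (\<Sum>j<d. real (w j) * ip d (U k) (P j))"
      by simp
    also have "(\<Sum>j<d. real (w j) * ip d (U k) (P j)) = (\<Sum>j<d. real (w j) * (if j = k then real W / real (w k) else 0) - real (w j))"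
      using U_prop[of k] wk_pos[OF k] by (intro sum.cong) (auto simp: tgt_def field_simps)
    also have "\<dots> = (\<Sum>j<d. real (w j) * (if j = k then real W / real (w k) else 0)) - (\<Sum>j<d. real (w j))"
      by (rule sum_subtractf)
    also have "(\<Sum>j<d. real (w j) * (if j = k then real W / real (w k) else 0)) = (\<Sum>j<d. (if j = k then real W else 0))"
      using wk_pos[OF k] by (intro sum.cong) auto
    also have "\<dots> = real W" using kd by simp
    also have "(\<Sum>j<d. real (w j)) = real W - real (w d)"
    proof -
      have "{..<d} = {..d} - {d}" by auto
      then show ?thesis using sum_other[of d] by simp
    qed
    finally have "real (w d) * ip d (U k) (P d) = - real (w d)" by simp
    then have "real (w d) * ip d (U k) (P d) = real (w d) * (-1)" by simp
    then have "ip d (U k) (P d) = -1" using wk_pos[of d] by (subst (asm) mult_left_cancel) auto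
    then show ?thesis using jd False by simp
  qed
qed

lemma U_in: "in_Rd d (U k)" using U_prop by blast

lemma char: assumes k: "k \<le> d" and u: "in_Rd d u"
  shows "(\<forall>j\<le>d. j \<noteq> k \<longrightarrow> ip d u (P j) = -1) \<longleftrightarrow> u = U k"
proof
  assume h: "\<forall>j\<le>d. j \<noteq> k \<longrightarrow> ip d u (P j) = -1"
  have "ip d u (P j) = ip d (U k) (P j)" if "j < d" for j
  proof (cases "j = k")
    case True then show ?thesis using ipk[OF k h] U_ip[OF k, of j] that by simp
  next
    case False then show ?thesis using h U_ip[OF k, of j] that by simp
  qed
  then show "u = U k" using uniq_P[OF u U_in] by blast
next
  assume "u = U k" then show "\<forall>j\<le>d. j \<noteq> k \<longrightarrow> ip d u (P j) = -1" using U_ip[OF k] by simp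
qed

lemma U_ip2: assumes k: "k \<le> d" and j: "j \<le> d"
  shows "ip d (U k) (P j) = (if j = k then real W / real (w k) else 0) - 1"
  using U_ip[OF k j] wk_pos[OF k] by (simp add: diff_divide_distrib)

lemma sum_ipU: assumes k: "k \<le> d"
  shows "(\<Sum>j\<le>d. c j * ip d (U k) (P j)) = c k * real W / real (w k) - (\<Sum>j\<le>d. c j)"
proof -
  have "(\<Sum>j\<le>d. c j * ip d (U k) (P j)) = (\<Sum>j\<le>d. (if j = k then c k * real W / real (w k) else 0) - c j)"
    using U_ip2[OF k] by (intro sum.cong) (auto simp: right_diff_distrib)
  also have "\<dots> = c k * real W / real (w k) - (\<Sum>j\<le>d. c j)"
    using k by (simp add: sum_subtractf)
  finally show ?thesis .
qed

lemma sum_ipU2: assumes j: "j \<le> d"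
  shows "(\<Sum>k\<le>d. c k * ip d (U k) (P j)) = c j * real W / real (w j) - (\<Sum>k\<le>d. c k)"
proof -
  have "(\<Sum>k\<le>d. c k * ip d (U k) (P j)) = (\<Sum>k\<le>d. (if k = j then c j * real W / real (w j) else 0) - c k)"
    using U_ip2[OF _ j] by (intro sum.cong) (auto simp: right_diff_distrib)
  also have "\<dots> = c j * real W / real (w j) - (\<Sum>k\<le>d. c k)"
    using j by (simp add: sum_subtractf)
  finally show ?thesis .
qed

lemma ip_comb: "ip d u (\<lambda>i. \<Sum>j\<le>d. c j * real_of_int (vtx a b d j i)) = (\<Sum>j\<le>d. c j * ip d u (P j))"
  unfolding ip_def vec_of_def by (simp add: sum_distrib_left sum.swap[of _ "{..d}"] mult_ac)

lemma P_hull: assumes j: "j \<le> d" shows "P j \<in> simplex_hull (vtx a b d) d"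
proof -
  define c :: "nat \<Rightarrow> real" where "c = (\<lambda>l. if l = j then 1 else 0)"
  have "P j i = (\<Sum>l\<le>d. c l * real_of_int (vtx a b d l i))" for i
  proof -
    have "(\<Sum>l\<le>d. c l * real_of_int (vtx a b d l i)) = (\<Sum>l\<le>d. (if l = j then real_of_int (vtx a b d j i) else 0))"
      unfolding c_def by (intro sum.cong) auto
    also have "\<dots> = real_of_int (vtx a b d j i)" using j by simp
    finally show ?thesis by (simp add: vec_of_def)
  qed
  moreover have "(\<forall>l\<le>d. 0 \<le> c l)" "(\<Sum>l\<le>d. c l) = 1" using j unfolding c_def by auto
  ultimately show ?thesis unfolding simplex_hull_def using P_in by blast
qed

lemma dual_iff: "u \<in> dual_poly (vtx a b d) d \<longleftrightarrow> in_Rd d u \<and> (\<forall>j\<le>d. ip d u (P j) \<ge> -1)"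
proof
  assume "u \<in> dual_poly (vtx a b d) d"
  then have "in_Rd d u" and hh: "\<forall>x\<in>simplex_hull (vtx a b d) d. ip d u x \<ge> -1"
    unfolding dual_poly_def by auto
  then show "in_Rd d u \<and> (\<forall>j\<le>d. ip d u (P j) \<ge> -1)"
    using P_hull by simp
next
  assume h: "in_Rd d u \<and> (\<forall>j\<le>d. ip d u (P j) \<ge> -1)"
  have "ip d u x \<ge> -1" if "x \<in> simplex_hull (vtx a b d) d" for x
  proof -
    have "\<exists>c::nat\<Rightarrow>real. (\<forall>j\<le>d. 0 \<le> c j) \<and> (\<Sum>j\<le>d. c j) = 1 \<and> (\<forall>i\<in>{1..d}. x i = (\<Sum>j\<le>d. c j * real_of_int (vtx a b d j i)))"
      using that unfolding simplex_hull_def by simp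
    then obtain c :: "nat \<Rightarrow> real" where cc: "(\<forall>j\<le>d. 0 \<le> c j) \<and> (\<Sum>j\<le>d. c j) = 1 \<and> (\<forall>i\<in>{1..d}. x i = (\<Sum>j\<le>d. c j * real_of_int (vtx a b d j i)))"
      by (elim exE)
    then have c0: "\<forall>j\<le>d. 0 \<le> c j" and c1: "(\<Sum>j\<le>d. c j) = 1"
      and cx: "\<forall>i\<in>{1..d}. x i = (\<Sum>j\<le>d. c j * real_of_int (vtx a b d j i))" by auto
    have "ip d u x = ip d u (\<lambda>i. \<Sum>j\<le>d. c j * real_of_int (vtx a b d j i))"
      unfolding ip_def using cx by (intro sum.cong) auto
    also have "\<dots> = (\<Sum>j\<le>d. c j * ip d u (P j))" by (rule ip_comb)
    also have "\<dots> \<ge> (\<Sum>j\<le>d. c j * (-1))"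
    proof (rule sum_mono)
      fix j assume "j \<in> {..d}"
      then show "c j * (-1) \<le> c j * ip d u (P j)" using h c0 by (intro mult_left_mono) auto
    qed
    finally show ?thesis using c1 by (simp add: sum_negf)
  qed
  then show "u \<in> dual_poly (vtx a b d) d" unfolding dual_poly_def using h by simp
qed

lemma U_dual: assumes k: "k \<le> d" shows "U k \<in> dual_poly (vtx a b d) d"
  unfolding dual_iff
proof (intro conjI allI impI)
  fix j assume j: "j \<le> d"
  have "(real W - real (w k)) / real (w k) \<ge> 0" using W_ge[OF k] wk_pos[OF k] by simp
  then show "ip d (U k) (P j) \<ge> -1" using U_ip[OF k j] by auto
qed (rule U_in)

lemma U_vertex: assumes k: "k \<le> d" shows "is_vertex (dual_poly (vtx a b d) d) (U k)"
  unfolding is_vertex_def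
proof (intro conjI notI)
  show "U k \<in> dual_poly (vtx a b d) d" by (rule U_dual[OF k])
next
  assume "\<exists>y z. y \<in> dual_poly (vtx a b d) d \<and> z \<in> dual_poly (vtx a b d) d \<and> y \<noteq> z \<and> U k = (\<lambda>i. (y i + z i) / 2)"
  then obtain y z where y: "y \<in> dual_poly (vtx a b d) d" and z: "z \<in> dual_poly (vtx a b d) d"
    and yz: "y \<noteq> z" and m: "U k = (\<lambda>i. (y i + z i) / 2)" by blast
  have yt: "\<forall>j\<le>d. j \<noteq> k \<longrightarrow> ip d y (P j) = -1 \<and> ip d z (P j) = -1"
  proof (intro allI impI)
    fix j assume "j \<le> d" "j \<noteq> k"
    then have "ip d (U k) (P j) = -1" using U_ip[OF k] by simp
    moreover have "ip d (U k) (P j) = ip d (\<lambda>i. (y i + z i) / 2) (P j)" using m by simp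
    ultimately have "ip d y (P j) + ip d z (P j) = -2" unfolding ip_mid by simp
    moreover have "ip d y (P j) \<ge> -1" "ip d z (P j) \<ge> -1" using y z \<open>j \<le> d\<close> unfolding dual_iff by auto
    ultimately show "ip d y (P j) = -1 \<and> ip d z (P j) = -1" by linarith
  qed
  have "y = U k" using char[OF k] y yt unfolding dual_iff by blast
  moreover have "z = U k" using char[OF k] z yt unfolding dual_iff by blast
  ultimately show False using yz by simp
qed

lemma U_ne: assumes "k \<le> d" "l \<le> d" "k \<noteq> l" shows "U k \<noteq> U l"
proof
  assume "U k = U l"
  moreover have "ip d (U k) (P k) \<ge> 0" using U_ip[of k k] assms W_ge[of k] wk_pos[of k] by simp
  moreover have "ip d (U l) (P k) = -1" using U_ip[of l k] assms by simp
  ultimately show False by simp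
qed

lemma vertex_is_U: assumes v: "is_vertex (dual_poly (vtx a b d) d) u" shows "\<exists>k\<le>d. u = U k"
proof (rule ccontr)
  assume nk: "\<not> (\<exists>k\<le>d. u = U k)"
  have ud: "u \<in> dual_poly (vtx a b d) d" using v unfolding is_vertex_def by blast
  then have uin: "in_Rd d u" and uge: "\<forall>j\<le>d. ip d u (P j) \<ge> -1" unfolding dual_iff by auto
  have ex: "\<exists>j\<le>d. j \<noteq> k \<and> ip d u (P j) > -1" if "k \<le> d" for k
  proof -
    have "\<not> (\<forall>j\<le>d. j \<noteq> k \<longrightarrow> ip d u (P j) = -1)" using char[OF that uin] nk that by blast
    then show ?thesis using uge by force
  qed
  obtain j1 where j1: "j1 \<le> d" "j1 \<noteq> 0" "ip d u (P j1) > -1" using ex[of 0] by auto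
  obtain j2 where j2: "j2 \<le> d" "j2 \<noteq> j1" "ip d u (P j2) > -1" using ex[OF j1(1)] by auto
  define s1 where "s1 = ip d u (P j1) + 1"
  define s2 where "s2 = ip d u (P j2) + 1"
  have Wp: "real W > 0" using W_ge[of 0] wk_pos[of 0] by simp
  define e where "e = min (s1 * real (w j1) / real W) (s2 * real (w j2) / real W)"
  have e0: "e > 0" unfolding e_def s1_def s2_def using j1 j2 wk_pos Wp by simp
  have e1: "e * real W / real (w j1) \<le> s1"
  proof -
    have "e \<le> s1 * real (w j1) / real W" unfolding e_def by simp
    then have "e * real W \<le> s1 * real (w j1)" using Wp by (simp add: field_simps)
    then show ?thesis using wk_pos[OF j1(1)] by (simp add: field_simps)
  qed
  have e2: "e * real W / real (w j2) \<le> s2"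
  proof -
    have "e \<le> s2 * real (w j2) / real W" unfolding e_def by simp
    then have "e * real W \<le> s2 * real (w j2)" using Wp by (simp add: field_simps)
    then show ?thesis using wk_pos[OF j2(1)] by (simp add: field_simps)
  qed
  define h where "h = (\<lambda>i. U j1 i - U j2 i)"
  have iph: "ip d h (P j) = (if j = j1 then real W / real (w j1) else 0) - (if j = j2 then real W / real (w j2) else 0)"
    if "j \<le> d" for j
    unfolding h_def ip_diff_left using U_ip2[OF j1(1) that] U_ip2[OF j2(1) that] by simp
  have r1: "e * real W / real (w j1) \<ge> 0" using e0 Wp wk_pos[OF j1(1)] by simp
  have r2: "e * real W / real (w j2) \<ge> 0" using e0 Wp wk_pos[OF j2(1)] by simp
  have key: "ip d u (P j) - \<bar>e * ip d h (P j)\<bar> \<ge> -1" if j: "j \<le> d" for j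
  proof (cases "j = j1")
    case True
    then have "e * ip d h (P j) = e * real W / real (w j1)" using iph[OF j] j2(2) by simp
    then show ?thesis using r1 e1 True unfolding s1_def by simp
  next
    case False
    show ?thesis
    proof (cases "j = j2")
      case True
      then have "e * ip d h (P j) = - (e * real W / real (w j2))" using iph[OF j] False by simp
      then show ?thesis using r2 e2 True unfolding s2_def by simp
    next
      case False2: False
      then have "ip d h (P j) = 0" using iph[OF j] False by simp
      then show ?thesis using uge j by simp
    qed
  qed
  define y where "y = (\<lambda>i. u i + e * h i)"
  define z where "z = (\<lambda>i. u i + (- e) * h i)"
  have hin: "in_Rd d h" using U_in[of j1] U_in[of j2] unfolding h_def in_Rd_def by auto
  have yd: "y \<in> dual_poly (vtx a b d) d" unfolding dual_iff
  proof (intro conjI allI impI)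
    show "in_Rd d y" using uin hin unfolding y_def in_Rd_def by auto
  next
    fix j assume j: "j \<le> d"
    have "ip d y (P j) = ip d u (P j) + e * ip d h (P j)" unfolding y_def by (rule ip_axpy)
    then show "ip d y (P j) \<ge> -1" using key[OF j] by linarith
  qed
  have zd: "z \<in> dual_poly (vtx a b d) d" unfolding dual_iff
  proof (intro conjI allI impI)
    show "in_Rd d z" using uin hin unfolding z_def in_Rd_def by auto
  next
    fix j assume j: "j \<le> d"
    have "ip d z (P j) = ip d u (P j) + (-e) * ip d h (P j)" unfolding z_def by (rule ip_axpy)
    then show "ip d z (P j) \<ge> -1" using key[OF j] by linarith
  qed
  have "h \<noteq> (\<lambda>_. 0)"
  proof
    assume "h = (\<lambda>_. 0)"
    then have "U j1 i = U j2 i" for i unfolding h_def by (drule_tac fun_cong[of _ _ i]) simp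
    then have "U j1 = U j2" by (rule ext)
    then show False using U_ne[OF j1(1) j2(1)] j2(2) by simp
  qed
  then obtain i where "h i \<noteq> 0" by auto
  then have "y i \<noteq> z i" unfolding y_def z_def using e0 by simp
  then have "y \<noteq> z" by auto
  moreover have "u = (\<lambda>i. (y i + z i) / 2)" unfolding y_def z_def by (rule ext) simp
  ultimately show False using v yd zd unfolding is_vertex_def by blast
qed

lemma Wp: "real W > 0" using W_ge[of 0] wk_pos[of 0] by simp

lemma ip_cong2: "(\<forall>i\<in>{1..d}. x i = y i) \<Longrightarrow> ip d u x = ip d u y"
  unfolding ip_def by (intro sum.cong) auto

lemma rep: assumes u: "in_Rd d u"
  shows "u = (\<lambda>i. \<Sum>k\<le>d. (real (w k) * (ip d u (P k) + 1) / real W) * U k i)"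
proof (rule uniq_P[OF u])
  show "in_Rd d (\<lambda>i. \<Sum>k\<le>d. (real (w k) * (ip d u (P k) + 1) / real W) * U k i)"
    using U_in unfolding in_Rd_def by auto
  define l where "l = (\<lambda>k. real (w k) * (ip d u (P k) + 1) / real W)"
  have sl: "(\<Sum>k\<le>d. l k) = 1"
  proof -
    have "(\<Sum>k\<le>d. l k) = ((\<Sum>k\<le>d. real (w k) * ip d u (P k)) + (\<Sum>k\<le>d. real (w k))) / real W"
      unfolding l_def by (simp add: sum_divide_distrib[symmetric] distrib_left sum.distrib)
    also have "\<dots> = 1" using wsum Wp by (simp add: W_def)
    finally show ?thesis .
  qed
  show "\<forall>j<d. ip d u (P j) = ip d (\<lambda>i. \<Sum>k\<le>d. (real (w k) * (ip d u (P k) + 1) / real W) * U k i) (P j)"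
  proof (intro allI impI)
    fix j assume j: "j < d"
    have "ip d (\<lambda>i. \<Sum>k\<le>d. (real (w k) * (ip d u (P k) + 1) / real W) * U k i) (P j)
       = (\<Sum>k\<le>d. l k * ip d (U k) (P j))" unfolding l_def by (rule ip_lin_left)
    also have "\<dots> = l j * real W / real (w j) - 1" using sum_ipU2[of j l] j sl by simp
    also have "\<dots> = ip d u (P j)" unfolding l_def using Wp wk_pos[of j] j by simp
    finally show "ip d u (P j) = ip d (\<lambda>i. \<Sum>k\<le>d. (real (w k) * (ip d u (P k) + 1) / real W) * U k i) (P j)" by simp
  qed
qed

lemma zero_test: assumes "\<forall>k\<le>d. ip d (U k) y = 0" and i: "i \<in> {1..d}" shows "y i = 0"
proof -
  define e :: "nat \<Rightarrow> real" where "e = (\<lambda>l. if l = i then 1 else 0)"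
  have ein: "in_Rd d e" unfolding e_def in_Rd_def using i by auto
  have "ip d e y = (\<Sum>l=1..d. if l = i then y l else 0)" unfolding ip_def e_def by (intro sum.cong) auto
  also have "\<dots> = y i" using i by simp
  finally have "y i = ip d e y" by simp
  also have "\<dots> = ip d (\<lambda>i. \<Sum>k\<le>d. (real (w k) * (ip d e (P k) + 1) / real W) * U k i) y"
    using rep[OF ein] by metis
  also have "\<dots> = (\<Sum>k\<le>d. (real (w k) * (ip d e (P k) + 1) / real W) * ip d (U k) y)" by (rule ip_lin_left)
  also have "\<dots> = 0" using assms(1) by simp
  finally show ?thesis .
qed

lemma kernel: fixes c :: "nat \<Rightarrow> real"
  assumes h: "\<forall>i\<in>{1..d}. (\<Sum>j\<le>d. c j * real_of_int (vtx a b d j i)) = 0" and k: "k \<le> d"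
  shows "c k * real W = (\<Sum>j\<le>d. c j) * real (w k)"
proof -
  have "(\<Sum>j\<le>d. c j * ip d (U k) (P j)) = ip d (U k) (\<lambda>i. \<Sum>j\<le>d. c j * real_of_int (vtx a b d j i))"
    by (rule ip_comb[symmetric])
  also have "\<dots> = ip d (U k) (\<lambda>_. 0)" using h by (intro ip_cong2) auto
  also have "\<dots> = 0" by (simp add: ip_def)
  finally have "c k * real W / real (w k) - (\<Sum>j\<le>d. c j) = 0" using sum_ipU[OF k, of c] by simp
  then show ?thesis using wk_pos[OF k] by (simp add: field_simps)
qed

lemma aff: "aff_indep (vtx a b d) d"
  unfolding aff_indep_def
proof (intro allI impI)
  fix c :: "nat \<Rightarrow> real" and k assume h: "(\<Sum>j\<le>d. c j) = 0 \<and> (\<forall>i\<in>{1..d}. (\<Sum>j\<le>d. c j * real_of_int (vtx a b d j i)) = 0)"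
    and k: "k \<le> d"
  then have "c k * real W = 0" using kernel[of c k] by simp
  then show "c k = 0" using Wp by simp
qed

lemma wU0: "(\<Sum>k\<le>d. real (w k) * ip d (U k) x) = 0"
proof -
  have "(\<lambda>i. \<Sum>k\<le>d. real (w k) * U k i) = (\<lambda>_. 0)"
  proof (rule uniq_P)
    show "in_Rd d (\<lambda>i. \<Sum>k\<le>d. real (w k) * U k i)" using U_in unfolding in_Rd_def by auto
    show "in_Rd d (\<lambda>_. 0)" unfolding in_Rd_def by auto
    show "\<forall>j<d. ip d (\<lambda>i. \<Sum>k\<le>d. real (w k) * U k i) (P j) = ip d (\<lambda>_. 0) (P j)"
    proof (intro allI impI)
      fix j assume j: "j < d"
      have "ip d (\<lambda>i. \<Sum>k\<le>d. real (w k) * U k i) (P j) = (\<Sum>k\<le>d. real (w k) * ip d (U k) (P j))"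
        by (rule ip_lin_left)
      also have "\<dots> = 0" using sum_ipU2[of j "\<lambda>k. real (w k)"] j wk_pos[of j] by (simp add: W_def)
      finally show "ip d (\<lambda>i. \<Sum>k\<le>d. real (w k) * U k i) (P j) = ip d (\<lambda>_. 0) (P j)" by (simp add: ip_def)
    qed
  qed
  then have "ip d (\<lambda>i. \<Sum>k\<le>d. real (w k) * U k i) x = 0" by (simp add: ip_def)
  then show ?thesis by (simp add: ip_lin_left)
qed

lemma ip_bound: assumes "\<forall>i\<in>{1..d}. \<bar>x i\<bar> \<le> e"
  shows "\<bar>ip d u x\<bar> \<le> e * (\<Sum>i=1..d. \<bar>u i\<bar>)"
proof -
  have "\<bar>ip d u x\<bar> \<le> (\<Sum>i=1..d. \<bar>u i * x i\<bar>)" unfolding ip_def by (rule sum_abs)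
  also have "\<dots> \<le> (\<Sum>i=1..d. \<bar>u i\<bar> * e)"
    using assms by (intro sum_mono) (auto simp: abs_mult intro: mult_left_mono)
  finally show ?thesis by (simp add: sum_distrib_left mult.commute)
qed

lemma interior: "origin_in_interior (vtx a b d) d"
  unfolding origin_in_interior_def
proof -
  define M where "M = 1 + (\<Sum>k\<le>d. \<Sum>i=1..d. \<bar>U k i\<bar>)"
  have M1: "M \<ge> 1" unfolding M_def by (simp add: sum_nonneg)
  define e where "e = 1 / M"
  have e0: "e > 0" unfolding e_def using M1 by simp
  have "\<forall>x. in_Rd d x \<and> (\<Sum>i=1..d. (x i)\<^sup>2) < e\<^sup>2 \<longrightarrow> x \<in> simplex_hull (vtx a b d) d"
  proof (intro allI impI)
    fix x assume hx: "in_Rd d x \<and> (\<Sum>i=1..d. (x i)\<^sup>2) < e\<^sup>2"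
    have xb: "\<forall>i\<in>{1..d}. \<bar>x i\<bar> \<le> e"
    proof
      fix i assume i: "i \<in> {1..d}"
      have "(x i)\<^sup>2 \<le> (\<Sum>i=1..d. (x i)\<^sup>2)" using i by (intro member_le_sum) auto
      then have "\<bar>x i\<bar>\<^sup>2 < e\<^sup>2" using hx by simp
      then show "\<bar>x i\<bar> \<le> e" using e0 power2_less_imp_less[of "\<bar>x i\<bar>" e] by simp
    qed
    have ipb: "\<bar>ip d (U k) x\<bar> \<le> 1" if k: "k \<le> d" for k
    proof -
      have "\<bar>ip d (U k) x\<bar> \<le> e * (\<Sum>i=1..d. \<bar>U k i\<bar>)" by (rule ip_bound[OF xb])
      also have "(\<Sum>i=1..d. \<bar>U k i\<bar>) \<le> M" unfolding M_def
        using member_le_sum[of k "{..d}" "\<lambda>k. \<Sum>i=1..d. \<bar>U k i\<bar>"] k by (simp add: sum_nonneg)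
      then have "e * (\<Sum>i=1..d. \<bar>U k i\<bar>) \<le> e * M" using e0 by simp
      also have "e * M = 1" unfolding e_def using M1 by simp
      finally show ?thesis by simp
    qed
    define c where "c = (\<lambda>k. real (w k) / real W * (1 + ip d (U k) x))"
    have c0: "\<forall>j\<le>d. 0 \<le> c j"
    proof (intro allI impI)
      fix j assume "j \<le> d" then have "1 + ip d (U j) x \<ge> 0" using ipb[of j] by linarith
      then show "0 \<le> c j" unfolding c_def using Wp by simp
    qed
    have c1: "(\<Sum>j\<le>d. c j) = 1"
    proof -
      have "(\<Sum>j\<le>d. c j) = ((\<Sum>j\<le>d. real (w j)) + (\<Sum>j\<le>d. real (w j) * ip d (U j) x)) / real W"
        unfolding c_def by (simp add: sum_divide_distrib[symmetric] distrib_left sum.distrib add_divide_distrib)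
      also have "\<dots> = 1" using wU0 Wp by (simp add: W_def)
      finally show ?thesis .
    qed
    define y where "y = (\<lambda>i. (\<Sum>j\<le>d. c j * real_of_int (vtx a b d j i)) - x i)"
    have "ip d (U k) y = 0" if k: "k \<le> d" for k
    proof -
      have "ip d (U k) y = (\<Sum>j\<le>d. c j * ip d (U k) (P j)) - ip d (U k) x"
        unfolding y_def ip_diff_right ip_comb ..
      also have "\<dots> = c k * real W / real (w k) - 1 - ip d (U k) x" using sum_ipU[OF k, of c] c1 by simp
      also have "\<dots> = 0" unfolding c_def using Wp wk_pos[OF k] by simp
      finally show ?thesis .
    qed
    then have "\<forall>i\<in>{1..d}. y i = 0" using zero_test by blast
    then have "\<forall>i\<in>{1..d}. x i = (\<Sum>j\<le>d. c j * real_of_int (vtx a b d j i))" unfolding y_def by simp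
    then show "x \<in> simplex_hull (vtx a b d) d" unfolding simplex_hull_def using hx c0 c1 by blast
  qed
  then show "\<exists>e>0. \<forall>x. in_Rd d x \<and> (\<Sum>i=1..d. (x i)\<^sup>2) < e\<^sup>2 \<longrightarrow> x \<in> simplex_hull (vtx a b d) d"
    using e0 by blast
qed

definition "Mi i = mat d d (\<lambda>(r, c). vtx a b d (if c < i then c else Suc c) (Suc r))"
definition "D j = (-1) ^ j * det (Mi j)"

lemma weight_D: "weight (vtx a b d) d j = \<bar>D j\<bar>"
  unfolding weight_def D_def Mi_def by (simp add: abs_mult)

lemma detMd: "det (Mi d) \<noteq> 0"
proof -
  have car: "Mi d \<in> carrier_mat d d" unfolding Mi_def by simp
  have ut: "upper_triangular (Mi d)" unfolding upper_triangular_def Mi_def by (auto simp: vtx_def)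
  have "det (Mi d) = prod_list (diag_mat (Mi d))" by (rule det_upper_triangular[OF ut car])
  moreover have "0 \<notin> set (diag_mat (Mi d))"
  proof
    assume "0 \<in> set (diag_mat (Mi d))"
    then obtain r where r: "r < d" "Mi d $$ (r, r) = 0" unfolding diag_mat_def Mi_def by auto
    then have "a (Suc r) (Suc r) = 0" unfolding Mi_def by (simp add: vtx_def)
    moreover have "a (Suc r) (Suc r) \<ge> 1" using diag r(1) by auto
    ultimately show False by simp
  qed
  ultimately show ?thesis by (simp add: prod_list_zero_iff)
qed

lemma D_rel: assumes i: "i \<in> {1..d}" shows "(\<Sum>j\<le>d. D j * vtx a b d j i) = 0"
proof -
  define N where "N = mat (Suc d) (Suc d) (\<lambda>(r, c). if r = 0 then vtx a b d c i else vtx a b d c r)"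
  have car: "N \<in> carrier_mat (Suc d) (Suc d)" unfolding N_def by simp
  have "det N = 0"
  proof (rule det_identical_rows[OF car, of 0 i])
    show "0 \<noteq> i" "0 < Suc d" "i < Suc d" using i by auto
    show "row N 0 = row N i" unfolding N_def row_def using i by (intro eq_vecI) auto
  qed
  moreover have "det N = (\<Sum>j<Suc d. N $$ (0, j) * cofactor N 0 j)"
    by (rule laplace_expansion_row[OF car]) simp
  moreover have "mat_delete N 0 j = Mi j" if "j < Suc d" for j
    unfolding mat_delete_def N_def Mi_def by (intro eq_matI) auto
  ultimately have "(\<Sum>j<Suc d. N $$ (0, j) * cofactor N 0 j) = 0" by simp
  moreover have "(\<Sum>j<Suc d. N $$ (0, j) * cofactor N 0 j) = (\<Sum>j\<le>d. D j * vtx a b d j i)"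
  proof (rule sum.cong)
    show "{..<Suc d} = {..d}" by auto
  next
    fix j assume j: "j \<in> {..d}"
    have "mat_delete N 0 j = Mi j"
      unfolding mat_delete_def N_def Mi_def by (intro eq_matI) auto
    then show "N $$ (0, j) * cofactor N 0 j = D j * vtx a b d j i"
      unfolding cofactor_def D_def using j by (simp add: N_def)
  qed
  ultimately show ?thesis by simp
qed

lemma D_prop: "\<forall>k\<le>d. D k * int W = (\<Sum>j\<le>d. D j) * int (w k)"
proof (intro allI impI)
  fix k assume k: "k \<le> d"
  have "\<forall>i\<in>{1..d}. (\<Sum>j\<le>d. real_of_int (D j) * real_of_int (vtx a b d j i)) = 0"
  proof
    fix i assume "i \<in> {1..d}"
    then have "real_of_int (\<Sum>j\<le>d. D j * vtx a b d j i) = 0" using D_rel by simp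
    then show "(\<Sum>j\<le>d. real_of_int (D j) * real_of_int (vtx a b d j i)) = 0" by simp
  qed
  from kernel[OF this k] have "real_of_int (D k * int W) = real_of_int ((\<Sum>j\<le>d. D j) * int (w k))" by simp
  then show "D k * int W = (\<Sum>j\<le>d. D j) * int (w k)" by (simp only: of_int_eq_iff)
qed

lemma reduced: assumes g1: "Gcd ((\<lambda>i. int (w i)) ` {0..d}) = 1"
  shows "\<forall>i\<le>d. reduced_weight (vtx a b d) d i = int (w i)"
proof -
  define S where "S = (\<Sum>j\<le>d. D j)"
  define T where "T = \<bar>S\<bar>"
  have absD: "\<bar>D k\<bar> * int W = T * int (w k)" if "k \<le> d" for k
    using D_prop that unfolding T_def S_def by (metis abs_mult abs_of_nat)
  have "int W dvd T * int (w k)" if "k \<le> d" for k using absD[OF that] by (metis dvd_triv_right)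
  then have "int W dvd Gcd ((*) T ` (\<lambda>i. int (w i)) ` {0..d})" by (intro Gcd_greatest) auto
  also have "Gcd ((*) T ` (\<lambda>i. int (w i)) ` {0..d}) = T" unfolding Gcd_mult g1 T_def by simp
  finally obtain t where t: "T = int W * t" by (elim dvdE)
  have Wp': "int W > 0" using Wp by simp
  have Dt: "\<bar>D k\<bar> = t * int (w k)" if "k \<le> d" for k
    using absD[OF that] t Wp' by (simp add: mult_ac)
  have "D d \<noteq> 0" unfolding D_def using detMd by simp
  then have "t \<noteq> 0" using Dt[of d] by auto
  moreover have "t \<ge> 0"
  proof -
    have "int W * t \<ge> 0" using t unfolding T_def by simp
    then show ?thesis using Wp' by (simp add: zero_le_mult_iff)
  qed
  ultimately have tp: "t > 0" by simp
  have wt: "weight (vtx a b d) d ` {0..d} = (*) t ` (\<lambda>i. int (w i)) ` {0..d}"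
    unfolding weight_D image_image using Dt by (intro image_cong) auto
  have G: "Gcd (weight (vtx a b d) d ` {0..d}) = t" unfolding wt Gcd_mult g1 using tp by simp
  show ?thesis
  proof (intro allI impI)
    fix i assume i: "i \<le> d"
    show "reduced_weight (vtx a b d) d i = int (w i)"
      unfolding reduced_weight_def G weight_D Dt[OF i] using tp by simp
  qed
qed

lemma dv: assumes k: "k \<le> d" shows "dual_vertex (vtx a b d) d k = U k"
  and "\<exists>!u. is_vertex (dual_poly (vtx a b d) d) u \<and> (\<forall>j\<le>d. j \<noteq> k \<longrightarrow> ip d u (P j) = -1)"
proof -
  have ex: "\<exists>!u. is_vertex (dual_poly (vtx a b d) d) u \<and> (\<forall>j\<le>d. j \<noteq> k \<longrightarrow> ip d u (P j) = -1)"
  proof (rule ex1I[of _ "U k"])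
    show "is_vertex (dual_poly (vtx a b d) d) (U k) \<and> (\<forall>j\<le>d. j \<noteq> k \<longrightarrow> ip d (U k) (P j) = -1)"
      using U_vertex[OF k] char[OF k U_in] by simp
  next
    fix u assume h: "is_vertex (dual_poly (vtx a b d) d) u \<and> (\<forall>j\<le>d. j \<noteq> k \<longrightarrow> ip d u (P j) = -1)"
    then have "in_Rd d u" unfolding is_vertex_def dual_iff by blast
    then show "u = U k" using char[OF k] h by blast
  qed
  then show "\<exists>!u. is_vertex (dual_poly (vtx a b d) d) u \<and> (\<forall>j\<le>d. j \<noteq> k \<longrightarrow> ip d u (P j) = -1)" .
  show "dual_vertex (vtx a b d) d k = U k"
    unfolding dual_vertex_def
  proof (rule the1_equality[OF ex])
    show "is_vertex (dual_poly (vtx a b d) d) (U k) \<and> (\<forall>j\<le>d. j \<noteq> k \<longrightarrow> ip d (U k) (P j) = -1)"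
      using U_vertex[OF k] char[OF k U_in] by simp
  qed
qed

lemma formula: assumes k: "k \<le> d" and j: "j \<in> {1..d}"
  shows "U k j = (if j = k + 1
             then (real (\<Sum>i\<le>d. w i) - real (w k)) / (real_of_int (a j j) * real (w k))
                  - (\<Sum>l\<in>{1..<j}. real_of_int (a l j) * U k l) / real_of_int (a j j)
             else (-1 - (\<Sum>l\<in>{1..<j}. real_of_int (a l j) * U k l)) / real_of_int (a j j))"
proof -
  have "{1..j} = insert j {1..<j}" using j by auto
  then have "ip d (U k) (P (j - 1)) = U k j * a j j + (\<Sum>l\<in>{1..<j}. real_of_int (a l j) * U k l)"
    using ip_P[OF j, of "U k"] by (simp add: mult.commute)
  moreover have "ip d (U k) (P (j - 1)) = (if j = k + 1 then (real W - real (w k)) / real (w k) else -1)"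
    using U_ip[OF k, of "j - 1"] j by auto
  ultimately have e: "U k j * a j j + (\<Sum>l\<in>{1..<j}. real_of_int (a l j) * U k l) =
     (if j = k + 1 then (real W - real (w k)) / real (w k) else -1)" by simp
  have "a j j \<ge> 1" using diag j by auto
  then have A: "real_of_int (a j j) \<noteq> 0" by simp
  have gen: "x = (T - S) / A" if "x * A + S = T" "A \<noteq> 0" for x A S T :: real
    using that by (simp add: field_simps)
  show ?thesis
  proof (cases "j = k + 1")
    case True
    have "U k j = ((real W - real (w k)) / real (w k) - (\<Sum>l\<in>{1..<j}. real_of_int (a l j) * U k l)) / a j j"
      using gen[OF e[unfolded if_P[OF True]] A] .
    then show ?thesis unfolding if_P[OF True] W_def by (simp add: diff_divide_distrib divide_divide_eq_left mult.commute)
  next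
    case False
    show ?thesis unfolding if_not_P[OF False] using gen[OF e[unfolded if_not_P[OF False]] A] .
  qed
qed

end
theorem proposition5p1:
  fixes d g :: nat and gl \<alpha> w :: "nat \<Rightarrow> nat"
    and a :: "nat \<Rightarrow> nat \<Rightarrow> int" and b :: "nat \<Rightarrow> int"
    and V :: "nat \<Rightarrow> nat \<Rightarrow> int"
  assumes d2: "d \<ge> 2"
    and gl_pos: "\<forall>k\<le>d. gl k > 0"
    and g_lcm: "g = Lcm (gl ` {0..d})"
    and \<alpha>_pos: "\<forall>i\<le>d. \<alpha> i > 0"
    and \<alpha>_sum: "(\<Sum>i\<le>d. 1 / real (\<alpha> i)) = 1 / real g"
    and w_def: "\<forall>i\<le>d. w i = Lcm (\<alpha> ` {0..d}) div \<alpha> i"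
    and cond_i: "\<forall>k\<in>{1..d}. a k k \<ge> 1 \<and> a k k dvd int (\<alpha> (k - 1))"
    and cond_ii: "\<forall>k\<in>{1..d}. \<forall>i\<in>{1..<k}. 0 \<le> a i k \<and> a i k < a k k"
    and cond_iii: "\<forall>k\<in>{1..d}. b k * int (w d) = (\<Sum>j\<in>{k..d}. a k j * int (w (j - 1)))"
    and V_def: "V = vtx a b d"
  shows "IP_lattice_simplex V d
    \<and> (\<forall>i\<le>d. reduced_weight V d i = int (w i))
    \<and> (\<forall>k\<le>d.
         (\<exists>!u. is_vertex (dual_poly V d) u \<and> (\<forall>j\<le>d. j \<noteq> k \<longrightarrow> ip d u (vec_of (V j)) = -1))
       \<and> (\<forall>j\<in>{1..d}. dual_vertex V d k j =
            (if j = k + 1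
             then (real (\<Sum>i\<le>d. w i) - real (w k)) / (real_of_int (a j j) * real (w k))
                  - (\<Sum>l\<in>{1..<j}. real_of_int (a l j) * dual_vertex V d k l) / real_of_int (a j j)
             else (-1 - (\<Sum>l\<in>{1..<j}. real_of_int (a l j) * dual_vertex V d k l)) / real_of_int (a j j))))
    \<and> ((\<forall>k\<le>d. \<exists>z::nat \<Rightarrow> int. (\<forall>j\<in>{1..d}. real_of_int (z j) = real (gl k) * dual_vertex V d k j)
                             \<and> primitive_vec d z)
       \<longrightarrow> gorenstein_index V d = g \<and> (\<forall>k\<le>d. local_gorenstein_index V d k = gl k))"
proof -
  have d1: "d \<ge> 1" using d2 by simp
  define L where "L = Lcm (\<alpha> ` {0..d})"
  have "L \<noteq> 0" unfolding L_def using \<alpha>_pos by (subst Lcm_0_iff) auto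
  then have Lp: "L > 0" by simp
  have adv: "\<alpha> i dvd L" if "i \<le> d" for i unfolding L_def using that by (intro dvd_Lcm) auto
  have wL: "w i = L div \<alpha> i" if "i \<le> d" for i using w_def that unfolding L_def by simp
  have wpos: "\<forall>i\<le>d. w i > 0"
  proof (intro allI impI)
    fix i assume i: "i \<le> d"
    have "\<alpha> i \<le> L" using adv[OF i] Lp by (simp add: dvd_imp_le)
    then show "w i > 0" using wL[OF i] \<alpha>_pos i by (simp add: div_greater_zero_iff)
  qed
  interpret tri d a b w
  proof
    show "1 \<le> d" by (rule d1)
    show "\<forall>k\<in>{1..d}. 1 \<le> a k k" using cond_i by auto
    show "\<forall>i\<le>d. 0 < w i" by (rule wpos)
    show "\<forall>k\<in>{1..d}. b k * int (w d) = (\<Sum>j = k..d. a k j * int (w (j - 1)))" by (rule cond_iii)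
  qed
  have gnat: "Gcd (w ` {0..d}) = 1"
    proof -
      define G where "G = Gcd (w ` {0..d})"
      have Gw0: "G dvd w 0" unfolding G_def by (rule Gcd_dvd) simp
      have "w 0 \<noteq> 0" using wpos by simp
      then have G0: "G \<noteq> 0" using Gw0 by (cases "G = 0") simp_all
      note Gw0
      moreover have "L = \<alpha> 0 * w 0" using wL[of 0] adv[of 0] by simp
      then have "w 0 dvd L" by (metis dvd_triv_right)
      ultimately have GL: "G dvd L" by (rule dvd_trans)
      have "\<alpha> i dvd L div G" if i: "i \<le> d" for i
      proof -
        have "G dvd w i" unfolding G_def using i by (intro Gcd_dvd) auto
        then obtain m where m: "w i = G * m" by (elim dvdE)
        have "L = \<alpha> i * w i" using wL[OF i] adv[OF i] by simp
        then have "L = G * (\<alpha> i * m)" using m by simp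
        then have "L div G = \<alpha> i * m" using G0 by simp
        then show ?thesis by simp
      qed
      then have "L dvd L div G" unfolding L_def by (intro Lcm_least) auto
      moreover have "L div G * G = L" using GL by simp
      moreover have "L div G > 0" using Lp calculation(2) by (metis gr0I mult_0)
      ultimately have "L \<le> L div G" by (simp add: dvd_imp_le)
      then have "L * G \<le> L div G * G" by (rule mult_right_mono) simp
      also have "\<dots> = L" using GL by simp
      finally have "L * G \<le> L * 1" by simp
      then have "G \<le> 1" using Lp by (simp only: mult_le_cancel1)
      then show ?thesis using G0 unfolding G_def by linarith
    qed
  have g1: "Gcd ((\<lambda>i. int (w i)) ` {0..d}) = 1"
  proof -
    have "Gcd ((\<lambda>i. int (w i)) ` {0..d}) = Gcd (int ` (w ` {0..d}))" by (simp add: image_image)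
    also have "\<dots> = int (Gcd (w ` {0..d}))" using Gcd_int_eq[of "w ` {0..d}"] by simp
    finally show ?thesis using gnat by simp
  qed
  have part1: "IP_lattice_simplex V d" unfolding IP_lattice_simplex_def V_def using aff interior by simp
  have part2: "\<forall>i\<le>d. reduced_weight V d i = int (w i)" unfolding V_def using reduced[OF g1] .
  have part3: "\<forall>k\<le>d.
         (\<exists>!u. is_vertex (dual_poly V d) u \<and> (\<forall>j\<le>d. j \<noteq> k \<longrightarrow> ip d u (vec_of (V j)) = -1))
       \<and> (\<forall>j\<in>{1..d}. dual_vertex V d k j =
            (if j = k + 1
             then (real (\<Sum>i\<le>d. w i) - real (w k)) / (real_of_int (a j j) * real (w k))
                  - (\<Sum>l\<in>{1..<j}. real_of_int (a l j) * dual_vertex V d k l) / real_of_int (a j j)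
             else (-1 - (\<Sum>l\<in>{1..<j}. real_of_int (a l j) * dual_vertex V d k l)) / real_of_int (a j j)))"
  proof (intro allI impI conjI)
    fix k assume k: "k \<le> d"
    show "\<exists>!u. is_vertex (dual_poly V d) u \<and> (\<forall>j\<le>d. j \<noteq> k \<longrightarrow> ip d u (vec_of (V j)) = -1)"
      unfolding V_def by (rule dv(2)[OF k])
    have dk: "dual_vertex V d k = U k" unfolding V_def by (rule dv(1)[OF k])
    show "\<forall>j\<in>{1..d}. dual_vertex V d k j =
            (if j = k + 1
             then (real (\<Sum>i\<le>d. w i) - real (w k)) / (real_of_int (a j j) * real (w k))
                  - (\<Sum>l\<in>{1..<j}. real_of_int (a l j) * dual_vertex V d k l) / real_of_int (a j j)
             else (-1 - (\<Sum>l\<in>{1..<j}. real_of_int (a l j) * dual_vertex V d k l)) / real_of_int (a j j))"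
      unfolding dk using formula[OF k] by blast
  qed
  have dvU: "dual_vertex V d k = U k" if "k \<le> d" for k unfolding V_def using dv(1)[OF that] .
  have part4: "gorenstein_index V d = g \<and> (\<forall>k\<le>d. local_gorenstein_index V d k = gl k)"
    if prim: "\<forall>k\<le>d. \<exists>z::nat \<Rightarrow> int. (\<forall>j\<in>{1..d}. real_of_int (z j) = real (gl k) * dual_vertex V d k j)
                             \<and> primitive_vec d z"
  proof -
    have intiff: "(\<forall>j\<in>{1..d}. real n * U k j \<in> \<int>) \<longleftrightarrow> gl k dvd n" if k: "k \<le> d" for k n
    proof -
      obtain z :: "nat \<Rightarrow> int" where z: "\<forall>j\<in>{1..d}. real_of_int (z j) = real (gl k) * U k j"
        and zp: "Gcd (z ` {1..d}) = 1" using prim k dvU[OF k] unfolding primitive_vec_def by auto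
      have glp: "real (gl k) > 0" using gl_pos k by simp
      show ?thesis
      proof
        assume h: "\<forall>j\<in>{1..d}. real n * U k j \<in> \<int>"
        have "int (gl k) dvd int n * z j" if j: "j \<in> {1..d}" for j
        proof -
          obtain m where m: "real n * U k j = real_of_int m" using h j Ints_cases by metis
          have "real_of_int (int n * z j) = real (gl k) * (real n * U k j)" using z j by simp
          also have "\<dots> = real_of_int (int (gl k) * m)" using m by simp
          finally have "int n * z j = int (gl k) * m" by (simp only: of_int_eq_iff)
          then show ?thesis by simp
        qed
        then have "int (gl k) dvd Gcd ((*) (int n) ` z ` {1..d})" by (intro Gcd_greatest) auto
        also have "Gcd ((*) (int n) ` z ` {1..d}) = int n" unfolding Gcd_mult zp by simp
        finally show "gl k dvd n" by simp
      next
        assume "gl k dvd n"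
        then obtain m where m: "n = gl k * m" by (elim dvdE)
        show "\<forall>j\<in>{1..d}. real n * U k j \<in> \<int>"
        proof
          fix j assume j: "j \<in> {1..d}"
          have "real n * U k j = real m * real_of_int (z j)" using z j m by simp
          then show "real n * U k j \<in> \<int>" by simp
        qed
      qed
    qed
    have loc: "local_gorenstein_index V d k = gl k" if k: "k \<le> d" for k
      unfolding local_gorenstein_index_def dvU[OF k]
    proof (rule Least_equality)
      show "1 \<le> gl k \<and> (\<forall>j\<in>{1..d}. real (gl k) * U k j \<in> \<int>)" using intiff[OF k] gl_pos k by auto
    next
      fix n assume "1 \<le> n \<and> (\<forall>j\<in>{1..d}. real n * U k j \<in> \<int>)"
      then show "gl k \<le> n" using intiff[OF k] by (auto intro: dvd_imp_le)
    qed
    have giff: "(\<forall>u. is_vertex (dual_poly V d) u \<longrightarrow> (\<forall>j\<in>{1..d}. real n * u j \<in> \<int>)) \<longleftrightarrow> g dvd n" for n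
    proof -
      have "(\<forall>u. is_vertex (dual_poly V d) u \<longrightarrow> (\<forall>j\<in>{1..d}. real n * u j \<in> \<int>)) \<longleftrightarrow>
            (\<forall>k\<le>d. \<forall>j\<in>{1..d}. real n * U k j \<in> \<int>)"
        unfolding V_def using vertex_is_U U_vertex by metis
      also have "\<dots> \<longleftrightarrow> (\<forall>k\<le>d. gl k dvd n)" using intiff by simp
      also have "\<dots> \<longleftrightarrow> g dvd n" unfolding g_lcm by (auto simp: Lcm_least dvd_Lcm intro: dvd_trans[OF dvd_Lcm])
      finally show ?thesis .
    qed
    have "g \<noteq> 0" unfolding g_lcm using gl_pos by (subst Lcm_0_iff) auto
    then have gp: "g \<ge> 1" by simp
    have "gorenstein_index V d = g"
      unfolding gorenstein_index_def
    proof (rule Least_equality)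
      show "1 \<le> g \<and> (\<forall>u. is_vertex (dual_poly V d) u \<longrightarrow> (\<forall>j\<in>{1..d}. real g * u j \<in> \<int>))"
        using giff gp by simp
    next
      fix n assume "1 \<le> n \<and> (\<forall>u. is_vertex (dual_poly V d) u \<longrightarrow> (\<forall>j\<in>{1..d}. real n * u j \<in> \<int>))"
      then show "g \<le> n" using giff by (auto intro: dvd_imp_le)
    qed
    then show ?thesis using loc by simp
  qed
  show ?thesis using part1 part2 part3 part4 by blast
qed

end
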